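(* Let $\mathcal{A}$ and $\mathcal{B}$ be hyperplane arrangements in a finite-dimensional $\mathbb{K}$-vector space $V$. Let $\varnothing\neq S\subseteq\mathcal{A}$ and $\varnothing\neq T\subseteq\mathcal{B}$ with $\langle S\rangle_{\mathcal{A}}=\mathcal{A}$ and $\langle T\rangle_{\mathcal{B}}=\mathcal{B}$. Suppose $\psi:L(\mathcal{A})\to L(\mathcal{B})$ is a poset isomorphism and $\varphi\in\mathrm{GL}(V)$ satisfy $\psi(S)=\varphi(S)=T$ and $\psi(H)=\varphi(H)$ for all $H\in S$. Then $\varphi(\mathcal{A})=\mathcal{B}$, i.e. $\{\varphi(H)\mid H\in\mathcal{A}\}=\mathcal{B}$.
   Context: For an arrangement $\mathcal{A}$, $L(\mathcal{A})$ is the set of all intersections of subsets of $\mathcal{A}$, ordered by reverse inclusion. For $\varnothing\neq S\subseteq\mathcal{A}$ set $\mathrm{Gen}_0(\mathcal{A},S):=S$ and inductively $\mathrm{Gen}_{i+1}(\mathcal{A},S):=\{H\in\mathcal{A}\mid \exists\, J\subseteq L(\mathrm{Gen}_i(\mathcal{A},S)) \text{ with } H=\sum_{X\in J}X\}$ (sum of subspaces). The subarrangement generated by $S$ is $\langle S\rangle_{\mathcal{A}}:=\bigcup_{i\ge0}\mathrm{Gen}_i(\mathcal{A},S)$; $S$ generates $\mathcal{A}$ if $\langle S\rangle_{\mathcal{A}}=\mathcal{A}$. *)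

theory Defs
  imports Complex_Main
begin

text \<open>Hyperplanes are linear subspaces of codimension one (central arrangements,
as the subspace sums in the generation process require).\<close>

definition is_hyperplane :: "('k::field \<Rightarrow> 'v::ab_group_add \<Rightarrow> 'v) \<Rightarrow> 'v set \<Rightarrow> bool" where
  "is_hyperplane scale H \<longleftrightarrow>
     Modules.module.subspace scale H \<and> Vector_Spaces.vector_space.dim scale H + 1 = Vector_Spaces.vector_space.dim scale (UNIV :: 'v set)"

definition is_arrangement :: "('k::field \<Rightarrow> 'v::ab_group_add \<Rightarrow> 'v) \<Rightarrow> 'v set set \<Rightarrow> bool" where
  "is_arrangement scale A \<longleftrightarrow> finite A \<and> (\<forall>H\<in>A. is_hyperplane scale H)"

text \<open>Intersection lattice: all intersections of subsets (empty intersection = V).\<close>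
definition intersection_lattice :: "'v set set \<Rightarrow> 'v set set" where
  "intersection_lattice A = {\<Inter> X | X. X \<subseteq> A}"

definition subspace_sum :: "('k::field \<Rightarrow> 'v::ab_group_add \<Rightarrow> 'v) \<Rightarrow> 'v set set \<Rightarrow> 'v set" where
  "subspace_sum scale J = Modules.module.span scale (\<Union> J)"

primrec Gen :: "('k::field \<Rightarrow> 'v::ab_group_add \<Rightarrow> 'v) \<Rightarrow> 'v set set \<Rightarrow> 'v set set \<Rightarrow> nat \<Rightarrow> 'v set set" where
  "Gen scale A S 0 = S"
| "Gen scale A S (Suc i) =
     {H \<in> A. \<exists>J. J \<subseteq> intersection_lattice (Gen scale A S i) \<and> H = subspace_sum scale J}"

definition generated :: "('k::field \<Rightarrow> 'v::ab_group_add \<Rightarrow> 'v) \<Rightarrow> 'v set set \<Rightarrow> 'v set set \<Rightarrow> 'v set set" where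
  "generated scale A S = (\<Union>i. Gen scale A S i)"

text \<open>Poset isomorphism L(A) \<rightarrow> L(B) (reverse inclusion on both sides,
equivalently inclusion on both sides).\<close>
definition poset_iso :: "('v set \<Rightarrow> 'v set) \<Rightarrow> 'v set set \<Rightarrow> 'v set set \<Rightarrow> bool" where
  "poset_iso \<psi> A B \<longleftrightarrow> bij_betw \<psi> (intersection_lattice A) (intersection_lattice B) \<and>
     (\<forall>X\<in>intersection_lattice A. \<forall>Y\<in>intersection_lattice A. X \<subseteq> Y \<longleftrightarrow> \<psi> X \<subseteq> \<psi> Y)"

end

theory Submission
  imports Defs
begin

lemma lattice_char:
  "Z \<in> intersection_lattice B \<longleftrightarrow> Z = \<Inter>{K\<in>B. Z \<subseteq> K}"
proof
  assume "Z \<in> intersection_lattice B"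
  then obtain X where X: "X \<subseteq> B" "Z = \<Inter>X" unfolding intersection_lattice_def by blast
  hence "X \<subseteq> {K\<in>B. Z \<subseteq> K}" by auto
  hence "\<Inter>{K\<in>B. Z \<subseteq> K} \<subseteq> Z" using X by blast
  thus "Z = \<Inter>{K\<in>B. Z \<subseteq> K}" by blast
next
  assume "Z = \<Inter>{K\<in>B. Z \<subseteq> K}"
  thus "Z \<in> intersection_lattice B" unfolding intersection_lattice_def by blast
qed

lemma lattice_Inter:
  assumes "M \<subseteq> intersection_lattice B"
  shows "\<Inter>M \<in> intersection_lattice B"
proof -
  let ?Q = "{K\<in>B. \<Inter>M \<subseteq> K}"
  have "\<Inter>?Q \<subseteq> m" if "m \<in> M" for m
  proof -
    have "m \<in> intersection_lattice B" using assms that by blast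
    hence m: "m = \<Inter>{K\<in>B. m \<subseteq> K}" by (rule lattice_char[THEN iffD1])
    have "{K\<in>B. m \<subseteq> K} \<subseteq> ?Q" using that by blast
    hence "\<Inter>?Q \<subseteq> \<Inter>{K\<in>B. m \<subseteq> K}" by blast
    thus ?thesis using m by simp
  qed
  hence "\<Inter>M = \<Inter>?Q" by blast
  thus ?thesis by (rule lattice_char[THEN iffD2])
qed

lemma sub_lattice: "A \<subseteq> intersection_lattice A"
proof
  fix H assume "H \<in> A"
  hence "{H} \<subseteq> A" "H = \<Inter>{H}" by auto
  thus "H \<in> intersection_lattice A" unfolding intersection_lattice_def by blast
qed

lemma iso_Inter:
  assumes "poset_iso \<psi> A B" "M \<subseteq> intersection_lattice A"
  shows "\<psi> (\<Inter>M) = \<Inter>(\<psi> ` M)"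
proof
  have I: "\<Inter>M \<in> intersection_lattice A" using lattice_Inter assms(2) .
  show "\<psi> (\<Inter>M) \<subseteq> \<Inter>(\<psi> ` M)"
  proof -
    have "\<psi> (\<Inter>M) \<subseteq> \<psi> m" if "m \<in> M" for m
      using assms that I unfolding poset_iso_def by blast
    thus ?thesis by blast
  qed
  have "\<psi> ` M \<subseteq> intersection_lattice B"
    using assms unfolding poset_iso_def bij_betw_def by blast
  hence "\<Inter>(\<psi> ` M) \<in> intersection_lattice B" by (rule lattice_Inter)
  then obtain W where W: "W \<in> intersection_lattice A" "\<psi> W = \<Inter>(\<psi> ` M)"
    using assms unfolding poset_iso_def bij_betw_def by (metis imageE)
  have "W \<subseteq> m" if "m \<in> M" for m
  proof -
    have "\<psi> W \<subseteq> \<psi> m" using W that by blast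
    thus ?thesis using assms W that unfolding poset_iso_def by blast
  qed
  hence "W \<subseteq> \<Inter>M" by blast
  hence "\<psi> W \<subseteq> \<psi> (\<Inter>M)" using assms W I unfolding poset_iso_def by blast
  thus "\<Inter>(\<psi> ` M) \<subseteq> \<psi> (\<Inter>M)" using W by simp
qed

lemma bij_image_Inter:
  assumes "bij f" shows "f ` (\<Inter>Y) = \<Inter>((\<lambda>y. f ` y) ` Y)"
proof
  show "f ` \<Inter>Y \<subseteq> \<Inter>((\<lambda>y. f ` y) ` Y)" by blast
  show "\<Inter>((\<lambda>y. f ` y) ` Y) \<subseteq> f ` \<Inter>Y"
  proof
    fix z assume z: "z \<in> \<Inter>((\<lambda>y. f ` y) ` Y)"
    obtain x where x: "z = f x" using assms unfolding bij_def surj_def by metis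
    have "x \<in> y" if "y \<in> Y" for y
      using z that x assms unfolding bij_def inj_def by blast
    thus "z \<in> f ` \<Inter>Y" using x by blast
  qed
qed

context finite_dimensional_vector_space
begin

lemma hyp_not_UNIV: "is_hyperplane scale H \<Longrightarrow> H \<noteq> UNIV"
  unfolding is_hyperplane_def by auto

lemma hyp_max:
  assumes "is_hyperplane scale H" "subspace W" "H \<subseteq> W" "W \<noteq> UNIV"
  shows "W = H"
proof (rule ccontr)
  assume ne: "W \<noteq> H"
  have sH: "subspace H" using assms(1) unfolding is_hyperplane_def by simp
  have "span H \<subset> span W" using sH assms(2,3) ne by (simp add: span_eq_iff[THEN iffD2])
  hence "dim H < dim W" by (rule dim_psubset)
  moreover have "dim W \<le> dim (UNIV::'b set)" by (rule dim_subset) simp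
  ultimately have "dim W = dimension"
    using assms(1) unfolding is_hyperplane_def by (simp add: dimension_def)
  hence "span W = UNIV" using dim_eq_full by blast
  thus False using assms(2,4) by (simp add: span_eq_iff[THEN iffD2])
qed

lemma pull:
  assumes "Vector_Spaces.linear scale scale \<phi>" "bij \<phi>" "is_hyperplane scale H"
    "subspace W" "\<phi> ` H \<subseteq> W" "W \<noteq> UNIV"
  shows "W = \<phi> ` H"
proof -
  interpret m: module_hom scale scale \<phi> using assms(1) by (simp add: linear_iff_module_hom)
  have s: "subspace (\<phi> -` W)" using m.subspace_vimage assms(4) by blast
  have "\<phi> -` W \<noteq> UNIV"
  proof
    assume "\<phi> -` W = UNIV"
    hence "range \<phi> \<subseteq> W" by blast
    thus False using assms(2,6) unfolding bij_def surj_def by blast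
  qed
  hence "\<phi> -` W = H" using hyp_max[OF assms(3) s] assms(5) by blast
  hence "\<phi> ` (\<phi> -` W) = \<phi> ` H" by simp
  thus ?thesis using assms(2) by (simp add: bij_is_surj surj_image_vimage_eq)
qed

lemma lattice_subspace:
  assumes "is_arrangement scale A" "X \<in> intersection_lattice A"
  shows "subspace X"
proof -
  obtain Y where Y: "Y \<subseteq> A" "X = \<Inter>Y" using assms(2) unfolding intersection_lattice_def by blast
  have "\<forall>s\<in>Y. subspace s" using Y assms(1) unfolding is_arrangement_def is_hyperplane_def by blast
  thus ?thesis using Y subspace_Inter by simp
qed

lemma core:
  assumes arA: "is_arrangement scale A" and arB: "is_arrangement scale B"
    and SA: "S \<subseteq> A" and gen: "generated scale A S = A" and iso: "poset_iso \<psi> A B"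
    and lin: "Vector_Spaces.linear scale scale \<phi>" and bij: "bij \<phi>"
    and agree: "\<forall>H\<in>S. \<psi> H = \<phi> ` H"
  shows "\<forall>H\<in>A. \<phi> ` H \<in> B"
proof -
  interpret m: module_hom scale scale \<phi> using lin by (simp add: linear_iff_module_hom)
  have hypA: "is_hyperplane scale H" if "H \<in> A" for H using arA that unfolding is_arrangement_def by blast
  have psiL: "\<psi> X \<in> intersection_lattice B" if "X \<in> intersection_lattice A" for X
    using iso that unfolding poset_iso_def bij_betw_def by blast
  have psiU: "\<psi> UNIV = UNIV" using iso_Inter[OF iso, of "{}"] by simp
  have ord: "\<forall>X\<in>intersection_lattice A. \<forall>Y\<in>intersection_lattice A. X \<subseteq> Y \<longleftrightarrow> \<psi> X \<subseteq> \<psi> Y"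
    using iso by (simp add: poset_iso_def)
  have inj: "inj_on \<psi> (intersection_lattice A)" using iso by (simp add: poset_iso_def bij_betw_def)
  have UL: "UNIV \<in> intersection_lattice A" unfolding intersection_lattice_def by blast
  have G: "\<forall>H\<in>Gen scale A S i. H \<in> A \<and> \<psi> H = \<phi> ` H" for i
  proof (induction i)
    case 0 then show ?case using SA agree by auto
  next
    case (Suc i)
    show ?case
    proof
      fix H assume "H \<in> Gen scale A S (Suc i)"
      then obtain J where HA: "H \<in> A" and J: "J \<subseteq> intersection_lattice (Gen scale A S i)"
        and HJ: "H = span (\<Union>J)" by (auto simp: subspace_sum_def)
      have JX: "X \<in> intersection_lattice A \<and> \<psi> X = \<phi> ` X" if "X \<in> J" for X
      proof -
        have "X \<in> intersection_lattice (Gen scale A S i)" using J that by blast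
        then obtain Y where Y: "Y \<subseteq> Gen scale A S i" "X = \<Inter>Y"
          unfolding intersection_lattice_def by blast
        have YA: "Y \<subseteq> intersection_lattice A" using Y Suc sub_lattice by blast
        have Yeq: "\<forall>y\<in>Y. \<psi> y = \<phi> ` y" using Y Suc by blast
        have im: "\<psi> ` Y = (\<lambda>y. \<phi> ` y) ` Y" using Yeq by (intro image_cong) auto
        have "\<psi> X = \<Inter>(\<psi> ` Y)" using iso_Inter[OF iso YA] Y by simp
        also have "\<dots> = \<Inter>((\<lambda>y. \<phi> ` y) ` Y)" using im by simp
        also have "\<dots> = \<phi> ` X" using bij_image_Inter[OF bij] Y by simp
        finally show ?thesis using lattice_Inter[OF YA] Y by simp
      qed
      have HL: "H \<in> intersection_lattice A" using HA sub_lattice by blast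
      have "\<phi> ` H = span (\<phi> ` \<Union>J)" unfolding HJ by (rule m.span_image[symmetric])
      also have "\<dots> \<subseteq> \<psi> H"
      proof (rule span_minimal)
        show "subspace (\<psi> H)" using lattice_subspace[OF arB psiL[OF HL]] .
        show "\<phi> ` \<Union>J \<subseteq> \<psi> H"
        proof
          fix z assume "z \<in> \<phi> ` \<Union>J"
          then obtain X where X: "X \<in> J" "z \<in> \<phi> ` X" by blast
          have "X \<subseteq> H" using X HJ span_superset by blast
          hence "\<psi> X \<subseteq> \<psi> H" using ord JX[OF X(1)] HL by blast
          thus "z \<in> \<psi> H" using JX X by blast
        qed
      qed
      finally have sub: "\<phi> ` H \<subseteq> \<psi> H" .
      have "\<psi> H \<noteq> UNIV"
      proof
        assume "\<psi> H = UNIV"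
        hence "\<psi> H = \<psi> UNIV" using psiU by simp
        hence "H = UNIV" using inj_onD[OF inj _ HL UL] by blast
        thus False using hyp_not_UNIV hypA HA by blast
      qed
      hence "\<psi> H = \<phi> ` H"
        using pull[OF lin bij hypA[OF HA] lattice_subspace[OF arB psiL[OF HL]] sub] by blast
      thus "H \<in> A \<and> \<psi> H = \<phi> ` H" using HA by simp
    qed
  qed
  show ?thesis
  proof
    fix H assume HA: "H \<in> A"
    then obtain i where "H \<in> Gen scale A S i" using gen unfolding generated_def by blast
    hence eq: "\<psi> H = \<phi> ` H" using G by blast
    have "H \<in> intersection_lattice A" using HA sub_lattice by blast
    hence "\<phi> ` H \<in> intersection_lattice B" using eq psiL by metis
    then obtain X where X: "X \<subseteq> B" "\<phi> ` H = \<Inter>X" unfolding intersection_lattice_def by blast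
    have "\<phi> ` H \<noteq> UNIV"
    proof
      assume "\<phi> ` H = UNIV"
      hence "H = UNIV" using bij unfolding bij_def inj_def by blast
      thus False using hyp_not_UNIV hypA HA by blast
    qed
    then obtain K where K: "K \<in> X" using X by blast
    have hK: "is_hyperplane scale K" using arB K X unfolding is_arrangement_def by blast
    have "K = \<phi> ` H"
    proof (rule pull[OF lin bij hypA[OF HA]])
      show "subspace K" using hK unfolding is_hyperplane_def by simp
      show "\<phi> ` H \<subseteq> K" using X K by blast
      show "K \<noteq> UNIV" using hK hyp_not_UNIV by blast
    qed
    thus "\<phi> ` H \<in> B" using K X by blast
  qed
qed

end

theorem mainTheorem2:
  fixes scale :: "'k::field \<Rightarrow> 'v::ab_group_add \<Rightarrow> 'v"
    and Basis :: "'v set"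
    and A B S T :: "'v set set"
    and \<psi> :: "'v set \<Rightarrow> 'v set"
    and \<phi> :: "'v \<Rightarrow> 'v"
  assumes "finite_dimensional_vector_space scale Basis"
    and "is_arrangement scale A" and "is_arrangement scale B"
    and "S \<noteq> {}" and "S \<subseteq> A" and "T \<noteq> {}" and "T \<subseteq> B"
    and "generated scale A S = A" and "generated scale B T = B"
    and "poset_iso \<psi> A B"
    and "Vector_Spaces.linear scale scale \<phi>" and "bij \<phi>"
    and "\<psi> ` S = T" and "(\<lambda>H. \<phi> ` H) ` S = T"
    and "\<forall>H\<in>S. \<psi> H = \<phi> ` H"
  shows "(\<lambda>H. \<phi> ` H) ` A = B"
proof -
  interpret fd: finite_dimensional_vector_space scale Basis by fact
  have fwd: "\<forall>H\<in>A. \<phi> ` H \<in> B" by (rule fd.core[OF assms(2,3,5,8,10,11,12,15)])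
  define \<psi>' where "\<psi>' = inv_into (intersection_lattice A) \<psi>"
  have bj: "bij_betw \<psi> (intersection_lattice A) (intersection_lattice B)"
    using assms(10) unfolding poset_iso_def by blast
  have iso': "poset_iso \<psi>' B A"
    unfolding poset_iso_def
  proof
    show "bij_betw \<psi>' (intersection_lattice B) (intersection_lattice A)"
      unfolding \<psi>'_def by (rule bij_betw_inv_into[OF bj])
    show "\<forall>X\<in>intersection_lattice B. \<forall>Y\<in>intersection_lattice B. X \<subseteq> Y \<longleftrightarrow> \<psi>' X \<subseteq> \<psi>' Y"
    proof (intro ballI)
      fix X Y assume X: "X \<in> intersection_lattice B" and Y: "Y \<in> intersection_lattice B"
      have XX: "X \<in> \<psi> ` intersection_lattice A" using X bj by (simp add: bij_betw_def)
      have X': "\<psi>' X \<in> intersection_lattice A" "\<psi> (\<psi>' X) = X"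
        unfolding \<psi>'_def using inv_into_into[OF XX] f_inv_into_f[OF XX] by auto
      have YY: "Y \<in> \<psi> ` intersection_lattice A" using Y bj by (simp add: bij_betw_def)
      have Y': "\<psi>' Y \<in> intersection_lattice A" "\<psi> (\<psi>' Y) = Y"
        unfolding \<psi>'_def using inv_into_into[OF YY] f_inv_into_f[OF YY] by auto
      have ordA: "\<forall>X\<in>intersection_lattice A. \<forall>Y\<in>intersection_lattice A. X \<subseteq> Y \<longleftrightarrow> \<psi> X \<subseteq> \<psi> Y"
        using assms(10) by (simp add: poset_iso_def)
      have "\<psi>' X \<subseteq> \<psi>' Y \<longleftrightarrow> \<psi> (\<psi>' X) \<subseteq> \<psi> (\<psi>' Y)" using ordA X'(1) Y'(1) by blast
      thus "X \<subseteq> Y \<longleftrightarrow> \<psi>' X \<subseteq> \<psi>' Y" using X'(2) Y'(2) by simp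
    qed
  qed
  have lin': "Vector_Spaces.linear scale scale (inv \<phi>)"
    using fd.inj_linear_imp_inv_linear assms(11,12) bij_is_inj by blast
  have bij': "bij (inv \<phi>)" using assms(12) by (rule bij_imp_bij_inv)
  have agree': "\<forall>K\<in>T. \<psi>' K = inv \<phi> ` K"
  proof
    fix K assume "K \<in> T"
    then obtain H where H: "H \<in> S" "K = \<psi> H" using assms(13) by blast
    have HL: "H \<in> intersection_lattice A" using H assms(5) sub_lattice by blast
    have "\<psi>' K = H" using H HL bj unfolding \<psi>'_def bij_betw_def by (simp add: inv_into_f_f)
    moreover have "inv \<phi> ` K = H" using H assms(15,12)
      by (simp add: bij_is_inj image_comp)
    ultimately show "\<psi>' K = inv \<phi> ` K" by simp
  qed
  have bwd: "\<forall>K\<in>B. inv \<phi> ` K \<in> A"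
    using fd.core[OF assms(3,2,7,9) iso' lin' bij' agree'] .
  show ?thesis
  proof
    show "(\<lambda>H. \<phi> ` H) ` A \<subseteq> B" using fwd by blast
    show "B \<subseteq> (\<lambda>H. \<phi> ` H) ` A"
    proof
      fix K assume "K \<in> B"
      hence "inv \<phi> ` K \<in> A" using bwd by blast
      moreover have "\<phi> ` (inv \<phi> ` K) = K" using assms(12) by (simp add: bij_is_surj image_comp surj_f_inv_f)
      ultimately show "K \<in> (\<lambda>H. \<phi> ` H) ` A" by (metis image_eqI)
    qed
  qed
qed

end
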